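(* Let $\Theta$ be a well-formed System $\mathsf{F_\wedge}$ context, $S,S'$ types over $\Theta$ and $T,T'$ types over $\Theta, X<:\top$. If $\Theta \vdash S' <: S$ and $\Theta, X <: \top \vdash T <: T'$, then $\Theta \vdash \forall X.\,T[X\wedge S/X^-] <: \forall X.\,T'[X \wedge S'/X^-]$.
   Context: System $\mathsf{F_\wedge}$: raw types $T ::= \top \mid X \mid T \to T \mid \forall X.T \mid T \wedge T$, identified up to $\alpha$-conversion. Contexts are finite sequences of assumptions $X<:T$ or $x:T$ with distinct variables, each type well-formed over the preceding part. Subtyping $\Theta \vdash S <: T$ is generated by: (Var) $\Theta, X<:T,\Theta' \vdash X <: T$; (Top) $T <: \top$; (Refl); (Trans); ($\to$) from $S'<:S$ and $T<:T'$ infer $S\to T <: S' \to T'$; ($\forall$) from $\Theta, X<:\top \vdash S <: T$ infer $\Theta \vdash \forall X.S <: \forall X.T$; (meet) $S\wedge S' <: S$, $S \wedge S' <: S'$, and from $T<:S$, $T<:S'$ infer $T <: S\wedge S'$. Mixed substitution $T[(S_-,S_+)/X]$: $X[(S_-,S_+)/X] = S_+$; $Y[(S_-,S_+)/X] = Y$ for $Y \not\equiv X$; $\top \mapsto \top$; $(T\to T')[(S_-,S_+)/X] = T[(S_+,S_-)/X] \to T'[(S_-,S_+)/X]$; $(\forall Y.T)[(S_-,S_+)/X] = \forall Y.T[(S_-,S_+)/X]$; $(T\wedge T')[(S_-,S_+)/X] = T[(S_-,S_+)/X] \wedge T'[(S_-,S_+)/X]$ (bound variables renamed to avoid capture). $T[U/X^-]$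 abbreviates $T[(U,X)/X]$, i.e. only negative occurrences of $X$ are replaced by $U$. *)

theory Defs
  imports Main
begin

text \<open>System F-meet with locally nameless de Bruijn indices (types up to alpha-conversion).
  Index 0 refers to the most recent binding of the context.\<close>

datatype ty = Top | TVar nat | Arr ty ty | All ty | Meet ty ty

text \<open>Context bindings: type variable bound X <: T, or term variable x : T.
  Contexts are lists with the most recent binding at the head; de Bruijn indices count
  all bindings (term and type).\<close>
datatype binding = TyB ty | VarB ty

fun bty :: "binding \<Rightarrow> ty" where
  "bty (TyB T) = T"
| "bty (VarB T) = T"

fun liftT :: "nat \<Rightarrow> nat \<Rightarrow> ty \<Rightarrow> ty" where
  "liftT n k Top = Top"
| "liftT n k (TVar i) = (if i < k then TVar i else TVar (i + n))"
| "liftT n k (Arr A B) = Arr (liftT n k A) (liftT n k B)"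
| "liftT n k (All A) = All (liftT n (Suc k) A)"
| "liftT n k (Meet A B) = Meet (liftT n k A) (liftT n k B)"

fun wfT :: "binding list \<Rightarrow> ty \<Rightarrow> bool" where
  "wfT \<Gamma> Top = True"
| "wfT \<Gamma> (TVar i) = (i < length \<Gamma> \<and> (\<exists>U. \<Gamma> ! i = TyB U))"
| "wfT \<Gamma> (Arr A B) = (wfT \<Gamma> A \<and> wfT \<Gamma> B)"
| "wfT \<Gamma> (All A) = wfT (TyB Top # \<Gamma>) A"
| "wfT \<Gamma> (Meet A B) = (wfT \<Gamma> A \<and> wfT \<Gamma> B)"

fun wfE :: "binding list \<Rightarrow> bool" where
  "wfE [] = True"
| "wfE (B # \<Gamma>) = (wfE \<Gamma> \<and> wfT \<Gamma> (bty B))"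

inductive sub :: "binding list \<Rightarrow> ty \<Rightarrow> ty \<Rightarrow> bool" where
  SVar: "i < length \<Gamma> \<Longrightarrow> \<Gamma> ! i = TyB U \<Longrightarrow> sub \<Gamma> (TVar i) (liftT (Suc i) 0 U)"
| STop: "sub \<Gamma> T Top"
| SRefl: "sub \<Gamma> T T"
| STrans: "sub \<Gamma> S U \<Longrightarrow> sub \<Gamma> U T \<Longrightarrow> sub \<Gamma> S T"
| SArr: "sub \<Gamma> S' S \<Longrightarrow> sub \<Gamma> T T' \<Longrightarrow> sub \<Gamma> (Arr S T) (Arr S' T')"
| SAll: "sub (TyB Top # \<Gamma>) S T \<Longrightarrow> sub \<Gamma> (All S) (All T)"
| SMeet1: "sub \<Gamma> (Meet S S') S"
| SMeet2: "sub \<Gamma> (Meet S S') S'"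
| SMeet3: "sub \<Gamma> T S \<Longrightarrow> sub \<Gamma> T S' \<Longrightarrow> sub \<Gamma> T (Meet S S')"

text \<open>Mixed substitution T[(Sm,Sp)/X] where X is index k; Sm, Sp live in the same scope
  as T (they may mention X itself). The variable X is not removed (no index decrement),
  matching the named definition in which other variables are left unchanged.\<close>
fun msub :: "nat \<Rightarrow> ty \<Rightarrow> ty \<Rightarrow> ty \<Rightarrow> ty" where
  "msub k Sm Sp Top = Top"
| "msub k Sm Sp (TVar i) = (if i = k then Sp else TVar i)"
| "msub k Sm Sp (Arr A B) = Arr (msub k Sp Sm A) (msub k Sm Sp B)"
| "msub k Sm Sp (All A) = All (msub (Suc k) (liftT 1 0 Sm) (liftT 1 0 Sp) A)"
| "msub k Sm Sp (Meet A B) = Meet (msub k Sm Sp A) (msub k Sm Sp B)"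

text \<open>T[U/X^-] for X = index 0: only negative occurrences replaced.\<close>
definition negsub0 :: "ty \<Rightarrow> ty \<Rightarrow> ty" where
  "negsub0 T U = msub 0 U (TVar 0) T"

end

theory Submission
  imports Defs
begin

lemma lift_lift_comm:
  "k \<le> j \<Longrightarrow> liftT 1 (j + n) (liftT n k U) = liftT n k (liftT 1 j U)"
proof (induction U arbitrary: k j)
  case (All U)
  then show ?case using All.IH[of "Suc k" "Suc j"] by simp
qed auto

lemma lift_lift_merge:
  "j \<le> k + n \<Longrightarrow> k \<le> j \<Longrightarrow> liftT m j (liftT n k U) = liftT (m + n) k U"
  by (induction U arbitrary: k j) auto

lemma msub_lift_id:
  "j \<le> k \<Longrightarrow> k < j + n \<Longrightarrow> msub k Sm Sp (liftT n j U) = liftT n j U"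
  by (induction U arbitrary: k j Sm Sp) auto

fun mapb :: "(ty \<Rightarrow> ty) \<Rightarrow> binding \<Rightarrow> binding" where
  "mapb f (TyB T) = TyB (f T)"
| "mapb f (VarB T) = VarB (f T)"

definition weak :: "nat \<Rightarrow> binding list \<Rightarrow> binding list \<Rightarrow> bool" where
  "weak j \<Gamma> \<Gamma>' \<longleftrightarrow> length \<Gamma>' = Suc (length \<Gamma>) \<and> j \<le> length \<Gamma> \<and>
     (\<forall>i<j. \<Gamma>' ! i = mapb (liftT 1 (j - Suc i)) (\<Gamma> ! i)) \<and>
     (\<forall>i. j \<le> i \<longrightarrow> i < length \<Gamma> \<longrightarrow> \<Gamma>' ! Suc i = \<Gamma> ! i)"

lemma weakening:
  "sub \<Gamma> A B \<Longrightarrow> weak j \<Gamma> \<Gamma>' \<Longrightarrow> sub \<Gamma>' (liftT 1 j A) (liftT 1 j B)"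
proof (induction arbitrary: j \<Gamma>' rule: sub.induct)
  case (SVar i \<Gamma> U)
  show ?case
  proof (cases "i < j")
    case True
    then have g: "\<Gamma>' ! i = TyB (liftT 1 (j - Suc i) U)" using SVar unfolding weak_def by auto
    have l: "i < length \<Gamma>'" using SVar unfolding weak_def by auto
    have "liftT 1 j (liftT (Suc i) 0 U) = liftT (Suc i) 0 (liftT 1 (j - Suc i) U)"
      using lift_lift_comm[of 0 "j - Suc i" "Suc i" U] True by simp
    then show ?thesis using True sub.SVar[OF l g] by simp
  next
    case False
    then have g: "\<Gamma>' ! Suc i = TyB U" using SVar unfolding weak_def by auto
    have l: "Suc i < length \<Gamma>'" using SVar unfolding weak_def by auto
    have "liftT 1 j (liftT (Suc i) 0 U) = liftT (Suc (Suc i)) 0 U"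
      using lift_lift_merge[of j 0 "Suc i" 1 U] False by simp
    then show ?thesis using False sub.SVar[OF l g] by simp
  qed
next
  case (STop \<Gamma> T) then show ?case by (simp add: sub.STop)
next
  case (SRefl \<Gamma> T) then show ?case by (simp add: sub.SRefl)
next
  case (STrans \<Gamma> S U T) then show ?case by (meson sub.STrans)
next
  case (SArr \<Gamma> S' S T T') then show ?case by (simp add: sub.SArr)
next
  case (SAll \<Gamma> S T)
  have "weak (Suc j) (TyB Top # \<Gamma>) (TyB Top # \<Gamma>')"
    using SAll.prems unfolding weak_def
    by (auto simp: nth_Cons split: nat.splits)
  then show ?case using SAll.IH by (simp add: sub.SAll)
next
  case (SMeet1 \<Gamma> S S') then show ?case by (simp add: sub.SMeet1)
next
  case (SMeet2 \<Gamma> S S') then show ?case by (simp add: sub.SMeet2)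
next
  case (SMeet3 \<Gamma> T S S') then show ?case by (simp add: sub.SMeet3)
qed

lemma weaken0: "sub \<Gamma> A B \<Longrightarrow> sub (b # \<Gamma>) (liftT 1 0 A) (liftT 1 0 B)"
  by (erule weakening) (simp add: weak_def)

definition cond :: "binding list \<Rightarrow> nat \<Rightarrow> bool" where
  "cond \<Gamma> k \<longleftrightarrow> (\<forall>i U. i \<le> k \<longrightarrow> i < length \<Gamma> \<longrightarrow> \<Gamma> ! i = TyB U \<longrightarrow> U = Top)"

lemma lemmaA:
  "sub \<Gamma> T T' \<Longrightarrow> cond \<Gamma> k \<Longrightarrow> sub \<Gamma> (msub k Sm Sp T) (msub k Sm Sp T')"
proof (induction arbitrary: k Sm Sp rule: sub.induct)
  case (SVar i \<Gamma> U)
  show ?case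
  proof (cases "i \<le> k")
    case True
    then have "U = Top" using SVar unfolding cond_def by blast
    then show ?thesis by (simp add: sub.STop)
  next
    case False
    then show ?thesis using msub_lift_id[of 0 k "Suc i"] sub.SVar[OF SVar.hyps] by simp
  qed
next
  case (STop \<Gamma> T) then show ?case by (simp add: sub.STop)
next
  case (SRefl \<Gamma> T) then show ?case by (simp add: sub.SRefl)
next
  case (STrans \<Gamma> S U T) then show ?case by (meson sub.STrans)
next
  case (SArr \<Gamma> S' S T T') then show ?case by (simp add: sub.SArr)
next
  case (SAll \<Gamma> S T)
  have "cond (TyB Top # \<Gamma>) (Suc k)"
    using SAll.prems unfolding cond_def
    by (auto simp: nth_Cons split: nat.splits)
  then show ?case using SAll.IH by (simp add: sub.SAll)
next
  case (SMeet1 \<Gamma> S S') then show ?case by (simp add: sub.SMeet1)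
next
  case (SMeet2 \<Gamma> S S') then show ?case by (simp add: sub.SMeet2)
next
  case (SMeet3 \<Gamma> T S S') then show ?case by (simp add: sub.SMeet3)
qed

lemma lemmaB:
  "sub \<Gamma> Sm' Sm \<Longrightarrow> sub \<Gamma> Sp Sp' \<Longrightarrow> sub \<Gamma> (msub k Sm Sp T) (msub k Sm' Sp' T)"
proof (induction T arbitrary: \<Gamma> k Sm Sp Sm' Sp')
  case Top then show ?case by (simp add: sub.SRefl)
next
  case (TVar x) then show ?case by (simp add: sub.SRefl)
next
  case (Arr T1 T2) then show ?case by (simp add: sub.SArr)
next
  case (All T)
  have "sub (TyB Top # \<Gamma>) (msub (Suc k) (liftT 1 0 Sm) (liftT 1 0 Sp) T)
          (msub (Suc k) (liftT 1 0 Sm') (liftT 1 0 Sp') T)"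
    by (rule All.IH; rule weaken0, simp add: All.prems)
  then show ?case by (simp add: sub.SAll)
next
  case (Meet T1 T2) then show ?case
    by (simp add: sub.SMeet3 sub.STrans[OF sub.SMeet1] sub.STrans[OF sub.SMeet2])
qed

theorem lemma3p7:
  assumes "wfE \<Theta>"
    and "wfT \<Theta> S" and "wfT \<Theta> S'"
    and "wfT (TyB Top # \<Theta>) T" and "wfT (TyB Top # \<Theta>) T'"
    and "sub \<Theta> S' S"
    and "sub (TyB Top # \<Theta>) T T'"
  shows "sub \<Theta> (All (negsub0 T (Meet (TVar 0) (liftT 1 0 S))))
                 (All (negsub0 T' (Meet (TVar 0) (liftT 1 0 S'))))"
proof -
  let ?G = "TyB Top # \<Theta>"
  have c: "cond ?G 0" unfolding cond_def by auto
  have 1: "sub ?G (msub 0 (Meet (TVar 0) (liftT 1 0 S)) (TVar 0) T)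
                  (msub 0 (Meet (TVar 0) (liftT 1 0 S)) (TVar 0) T')"
    using lemmaA[OF assms(7) c] .
  have w: "sub ?G (liftT 1 0 S') (liftT 1 0 S)" using weaken0[OF assms(6)] .
  have m: "sub ?G (Meet (TVar 0) (liftT 1 0 S')) (Meet (TVar 0) (liftT 1 0 S))"
    by (rule sub.SMeet3[OF sub.SMeet1 sub.STrans[OF sub.SMeet2 w]])
  have 2: "sub ?G (msub 0 (Meet (TVar 0) (liftT 1 0 S)) (TVar 0) T')
                  (msub 0 (Meet (TVar 0) (liftT 1 0 S')) (TVar 0) T')"
    using lemmaB[OF m sub.SRefl] .
  show ?thesis unfolding negsub0_def by (rule sub.SAll[OF sub.STrans[OF 1 2]])
qed

end
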